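(* Let $S$ be a set of bilabelled graphs, let $\mathscr{C}$ be the skew graph category generated by $S$ (the smallest skew graph category containing $S$), and let $F=\{(K,g_{\mathbf{a}}^{-1}g_{\mathbf{b}})\mid (K,\mathbf{a},\mathbf{b})\in\mathscr{C}\}$ be the corresponding graph fibration. Then every graph in the closure of $\{N_0,N_1\}\cup\{H\mid (H,\mathbf{a},\mathbf{b})\in S\}$ under arbitrary $f$-unions satisfies $F(K)\ne\emptyset$, and for every graph $K$ with $F(K)\neq\emptyset$, $$F(K)=\langle\!\langle \iota(g_{\mathbf{a}^*\mathbf{b}})\mid (H,\mathbf{a},\mathbf{b})\in S,\ \iota\colon H\to K\text{ an injective graph homomorphism}\rangle\!\rangle\trianglelefteq\mathbb{Z}_2^{*V(K)},$$ where $\langle\!\langle\cdot\rangle\!\rangle$ denotes the normal subgroup generated.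
   Context: Graphs are finite, undirected, without multiple edges, loops allowed, considered up to isomorphism; $N_k$ is the edgeless graph on $k$ vertices. For a set $V$, $\mathbb{Z}_2^{*V}$ is the group generated by $V$ subject to $v^2=e$; for a tuple $\mathbf{a}=(a_1,\dots,a_k)$ over $V$, $g_{\mathbf{a}}=a_1\cdots a_k$, and $\mathbf{a}^*$ is the reversed tuple, $\mathbf{a}^*\mathbf{b}$ the concatenation (so $g_{\mathbf{a}^*\mathbf{b}}=g_{\mathbf{a}}^{-1}g_{\mathbf{b}}$). A map $\phi\colon V\to V'$ induces maps on tuples and a homomorphism $\mathbb{Z}_2^{*V}\to\mathbb{Z}_2^{*V'}$, also denoted $\phi$. A vertex overlap of graphs $K,H$ is a subset $f\subset V(K)\times V(H)$ in which each vertex occurs at most once; $K\cup_fH$ is the quotient of $K\sqcup H$ identifying $v$ with $w$ for $(v,w)\in f$ (an edge between two vertices of the quotient iff there is one between some representatives); $f_K,f_H$ are the induced maps. The closure of a set of graphs under $f$-unions is the smallest set containing it and containing $K\cup_fH$ whenever it contains $K,H$. For a set $F$ of pairs $(K,a)$ with $a\in\mathbb{Z}_2^{*V(K)}$ (up to graph isomorphism), $F(K):=\{a\mid (K,a)\in F\}$. Bilabelled graph: $(K,\mathbf{a},\mathbf{b})$ with $K$ a graph, $\mathbf{a}\in V(K)^k$, $\mathbf{b}\in V(K)^l$, up to isomorphism of $K$ preserving the tuples. Operations: $f$-union $(K,\mathbf{a},\mathbf{b})\cup_f(H,\mathbf{c},\mathbf{d})=(K\cup_fH,f_K(\mathbf{a})f_H(\mathbf{c}),f_K(\mathbf{b})f_H(\mathbf{d}))$;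 composition (for $|\mathbf{b}|=|\mathbf{c}|$) $(H,\mathbf{c},\mathbf{d})\cdot(K,\mathbf{a},\mathbf{b})=(H\cdot K,\mathbf{a},\mathbf{d})$ with $H\cdot K$ the quotient of $K\sqcup H$ identifying $b_i$ with $c_i$ for all $i$; involution $(K,\mathbf{a},\mathbf{b})^*=(K,\mathbf{b},\mathbf{a})$. Let $\mathbf{0}=(N_0,\emptyset,\emptyset)$ and $\mathbf{M}^{k,l}=(M,(v,\dots,v),(v,\dots,v))$ for the one-vertex loopless graph $M$ with $k$ inputs, $l$ outputs. $\ker\mathbf{b}$ is the partition of positions of $\mathbf{b}$ by equal entries. A skew graph category is a set of bilabelled graphs containing $\mathbf{0},\mathbf{M}^{1,1},\mathbf{M}^{0,2}$ and closed under all $f$-unions, under compositions $\mathbf{H}\cdot\mathbf{K}$ of $\mathbf{K}=(K,\mathbf{a},\mathbf{b})$, $\mathbf{H}=(H,\mathbf{c},\mathbf{d})$ with $\ker\mathbf{b}=\ker\mathbf{c}$, and involution. (For a skew graph category, $F$ as defined is a graph fibration.) *)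

theory Defs
  imports Main "HOL-Algebra.Coset"
begin

text \<open>Graphs are considered up to isomorphism: all
constructions below are relational (any representative is allowed) and all generated
sets are closed under isomorphism.\<close>

type_synonym graph = "nat set \<times> nat set set"

definition verts :: "graph \<Rightarrow> nat set" where "verts G = fst G"
definition edges :: "graph \<Rightarrow> nat set set" where "edges G = snd G"

definition wf_graph :: "graph \<Rightarrow> bool" where
  "wf_graph G \<longleftrightarrow> finite (verts G) \<and>
     (\<forall>e\<in>edges G. e \<subseteq> verts G \<and> (card e = 1 \<or> card e = 2))"

definition edgeless :: "nat \<Rightarrow> graph" where
  "edgeless k = ({..<k}, {})"

definition graph_iso :: "graph \<Rightarrow> graph \<Rightarrow> (nat \<Rightarrow> nat) \<Rightarrow> bool" where
  "graph_iso K K' \<phi> \<longleftrightarrow> bij_betw \<phi> (verts K) (verts K') \<and>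
     edges K' = (\<lambda>e. \<phi> ` e) ` edges K"

definition vertex_overlap :: "graph \<Rightarrow> graph \<Rightarrow> (nat \<times> nat) set \<Rightarrow> bool" where
  "vertex_overlap K H f \<longleftrightarrow> f \<subseteq> verts K \<times> verts H \<and>
     (\<forall>v w w'. (v, w) \<in> f \<and> (v, w') \<in> f \<longrightarrow> w = w') \<and>
     (\<forall>v v' w. (v, w) \<in> f \<and> (v', w) \<in> f \<longrightarrow> v = v')"

text \<open>R (with the maps phiK, phiH) is (a representative of) the f-union of K and H:
the quotient of the disjoint union identifying v with w for (v,w) in f.\<close>

definition is_funion :: "graph \<Rightarrow> graph \<Rightarrow> (nat \<times> nat) set \<Rightarrow> graph
    \<Rightarrow> (nat \<Rightarrow> nat) \<Rightarrow> (nat \<Rightarrow> nat) \<Rightarrow> bool" where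
  "is_funion K H f R \<phi>K \<phi>H \<longleftrightarrow> wf_graph R \<and>
     \<phi>K ` verts K \<subseteq> verts R \<and> \<phi>H ` verts H \<subseteq> verts R \<and>
     inj_on \<phi>K (verts K) \<and> inj_on \<phi>H (verts H) \<and>
     verts R = \<phi>K ` verts K \<union> \<phi>H ` verts H \<and>
     (\<forall>v\<in>verts K. \<forall>w\<in>verts H. \<phi>K v = \<phi>H w \<longleftrightarrow> (v, w) \<in> f) \<and>
     edges R = (\<lambda>e. \<phi>K ` e) ` edges K \<union> (\<lambda>e. \<phi>H ` e) ` edges H"

definition graph_inj_hom :: "graph \<Rightarrow> graph \<Rightarrow> (nat \<Rightarrow> nat) \<Rightarrow> bool" where
  "graph_inj_hom H K \<iota> \<longleftrightarrow> \<iota> ` verts H \<subseteq> verts K \<and> inj_on \<iota> (verts H) \<and>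
     (\<forall>e\<in>edges H. \<iota> ` e \<in> edges K)"

type_synonym bgraph = "graph \<times> nat list \<times> nat list"

definition wf_bgraph :: "bgraph \<Rightarrow> bool" where
  "wf_bgraph X \<longleftrightarrow> (case X of (K, a, b) \<Rightarrow> wf_graph K \<and> set a \<subseteq> verts K \<and> set b \<subseteq> verts K)"

definition bzero :: bgraph where "bzero = (({}, {}), [], [])"

definition bM :: "nat \<Rightarrow> nat \<Rightarrow> bgraph" where
  "bM k l = (({0}, {}), replicate k 0, replicate l 0)"

definition same_ker :: "nat list \<Rightarrow> nat list \<Rightarrow> bool" where
  "same_ker b c \<longleftrightarrow> length b = length c \<and>
     (\<forall>i<length b. \<forall>j<length b. b ! i = b ! j \<longleftrightarrow> c ! i = c ! j)"

text \<open>Composition H.K with ker b = ker c is the quotient of K + H identifying b_i with c_i,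
which is the f-union for the overlap f = {(b_i,c_i)}.\<close>

inductive_set gen_cat :: "bgraph set \<Rightarrow> bgraph set" for S where
  base: "X \<in> S \<Longrightarrow> X \<in> gen_cat S"
| zero: "bzero \<in> gen_cat S"
| M11: "bM 1 1 \<in> gen_cat S"
| M02: "bM 0 2 \<in> gen_cat S"
| iso: "(K, a, b) \<in> gen_cat S \<Longrightarrow> graph_iso K K' \<phi> \<Longrightarrow>
        (K', map \<phi> a, map \<phi> b) \<in> gen_cat S"
| union: "(K, a, b) \<in> gen_cat S \<Longrightarrow> (H, c, d) \<in> gen_cat S \<Longrightarrow> vertex_overlap K H f \<Longrightarrow>
        is_funion K H f R \<phi>K \<phi>H \<Longrightarrow>
        (R, map \<phi>K a @ map \<phi>H c, map \<phi>K b @ map \<phi>H d) \<in> gen_cat S"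
| comp: "(K, a, b) \<in> gen_cat S \<Longrightarrow> (H, c, d) \<in> gen_cat S \<Longrightarrow> same_ker b c \<Longrightarrow>
        is_funion K H {(b ! i, c ! i) | i. i < length b} R \<phi>K \<phi>H \<Longrightarrow>
        (R, map \<phi>K a, map \<phi>H d) \<in> gen_cat S"
| inv: "(K, a, b) \<in> gen_cat S \<Longrightarrow> (K, b, a) \<in> gen_cat S"

inductive_set graph_closure :: "bgraph set \<Rightarrow> graph set" for S where
  N0: "edgeless 0 \<in> graph_closure S"
| N1: "edgeless 1 \<in> graph_closure S"
| base: "(H, a, b) \<in> S \<Longrightarrow> H \<in> graph_closure S"
| iso: "K \<in> graph_closure S \<Longrightarrow> graph_iso K K' \<phi> \<Longrightarrow> K' \<in> graph_closure S"
| union: "K \<in> graph_closure S \<Longrightarrow> H \<in> graph_closure S \<Longrightarrow> vertex_overlap K H f \<Longrightarrow>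
        is_funion K H f R \<phi>K \<phi>H \<Longrightarrow> R \<in> graph_closure S"

text \<open>Elements are reduced words (no two equal adjacent letters); g_w = redw w.\<close>

fun cancel1 :: "'a \<Rightarrow> 'a list \<Rightarrow> 'a list" where
  "cancel1 x [] = [x]"
| "cancel1 x (y # ys) = (if x = y then ys else x # y # ys)"

definition redw :: "'a list \<Rightarrow> 'a list" where
  "redw w = foldr cancel1 w []"

definition Z2free :: "'a set \<Rightarrow> 'a list monoid" where
  "Z2free V = \<lparr>carrier = {w. set w \<subseteq> V \<and> successively (\<noteq>) w},
               mult = (\<lambda>x y. redw (x @ y)), one = []\<rparr>"

definition normal_closure :: "('a, 'b) monoid_scheme \<Rightarrow> 'a set \<Rightarrow> 'a set" where
  "normal_closure G X = \<Inter>{N. N \<lhd> G \<and> X \<subseteq> N}"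

text \<open>The graph fibration F of a set of bilabelled graphs: F(K) = {g_a^{-1} g_b}.\<close>

definition Fib :: "bgraph set \<Rightarrow> graph \<Rightarrow> nat list set" where
  "Fib C K = {redw (rev a @ b) | a b. (K, a, b) \<in> C}"

definition gens :: "bgraph set \<Rightarrow> graph \<Rightarrow> nat list set" where
  "gens S K = {redw (map \<iota> (redw (rev a @ b))) | H a b \<iota>.
                 (H, a, b) \<in> S \<and> graph_inj_hom H K \<iota>}"

end

theory Submission
  imports Defs
begin


definition red :: "'a list \<Rightarrow> bool" where "red w = successively (\<noteq>) w"

lemma cancel1_red: "red z \<Longrightarrow> red (cancel1 c z)"
  unfolding red_def by (cases z) (auto simp: successively_Cons)

lemma cancel1_invol: "red z \<Longrightarrow> cancel1 c (cancel1 c z) = z"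
  unfolding red_def by (cases z; cases "tl z") (auto simp: successively_Cons)

lemma foldr_red: "red z \<Longrightarrow> red (foldr cancel1 x z)"
  by (induction x) (auto intro: cancel1_red)

lemma red_Nil[simp]: "red []" by (simp add: red_def)

lemma redw_red: "red (redw w)"
  unfolding redw_def by (rule foldr_red) simp

lemma redw_Cons: "redw (c # w) = cancel1 c (redw w)"
  by (simp add: redw_def)

lemma redw_append_foldr: "redw (x @ y) = foldr cancel1 x (redw y)"
  by (simp add: redw_def)

lemma foldr_redw: "red z \<Longrightarrow> foldr cancel1 (redw x) z = foldr cancel1 x z"
proof (induction x)
  case Nil then show ?case by (simp add: redw_def)
next
  case (Cons c x)
  have r: "red (redw x)" by (rule redw_red)
  show ?case
  proof (cases "\<exists>r'. redw x = c # r'")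
    case True
    then obtain r' where e: "redw x = c # r'" by blast
    have "foldr cancel1 (c # x) z = cancel1 c (foldr cancel1 (redw x) z)"
      using Cons by simp
    also have "\<dots> = cancel1 c (cancel1 c (foldr cancel1 r' z))" by (simp add: e)
    also have "\<dots> = foldr cancel1 r' z" by (rule cancel1_invol[OF foldr_red[OF Cons.prems]])
    finally show ?thesis by (simp add: redw_Cons e)
  next
    case False
    then have "cancel1 c (redw x) = c # redw x" by (cases "redw x") auto
    then show ?thesis using Cons by (simp add: redw_Cons)
  qed
qed

lemma redw_of_red: "red w \<Longrightarrow> redw w = w"
proof (induction w)
  case Nil then show ?case by (simp add: redw_def)
next
  case (Cons c w)
  then have "red w" by (auto simp: red_def successively_Cons)
  with Cons have "redw w = w" by simp
  with Cons.prems show ?case by (cases w) (auto simp: redw_Cons red_def)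
qed

lemma redw_redw[simp]: "redw (redw w) = redw w"
  by (rule redw_of_red[OF redw_red])

lemma redw_append_left: "redw (redw x @ y) = redw (x @ y)"
  by (simp add: redw_append_foldr foldr_redw redw_red)

lemma redw_append_right: "redw (x @ redw y) = redw (x @ y)"
  by (simp add: redw_append_foldr)

lemma foldr_rev_cancel: "red z \<Longrightarrow> foldr cancel1 (rev x) (foldr cancel1 x z) = z"
proof (induction x)
  case Nil then show ?case by simp
next
  case (Cons c x)
  have "foldr cancel1 (rev (c # x)) (foldr cancel1 (c # x) z)
      = foldr cancel1 (rev x) (cancel1 c (cancel1 c (foldr cancel1 x z)))" by simp
  also have "\<dots> = foldr cancel1 (rev x) (foldr cancel1 x z)"
    by (simp add: cancel1_invol foldr_red Cons.prems)
  finally show ?case using Cons by simp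
qed

lemma redw_rev_self: "redw (rev x @ x) = []"
  using foldr_rev_cancel[of "[]" x] by (simp add: redw_def)

lemma redw_self_rev: "redw (x @ rev x) = []"
  using redw_rev_self[of "rev x"] by simp

lemma cancel1_set: "set (cancel1 c z) \<subseteq> insert c (set z)"
  by (cases z) auto

lemma redw_set: "set (redw w) \<subseteq> set w"
proof (induction w)
  case Nil then show ?case by (simp add: redw_def)
next
  case (Cons c w) then show ?case using cancel1_set[of c "redw w"] by (auto simp: redw_Cons)
qed

lemma Z2_carrier: "carrier (Z2free V) = {w. set w \<subseteq> V \<and> red w}"
  by (simp add: Z2free_def red_def)

lemma Z2_mult: "x \<otimes>\<^bsub>Z2free V\<^esub> y = redw (x @ y)"
  by (simp add: Z2free_def)

lemma Z2_one: "\<one>\<^bsub>Z2free V\<^esub> = []"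
  by (simp add: Z2free_def)

lemma redw_in_carrier: "set w \<subseteq> V \<Longrightarrow> redw w \<in> carrier (Z2free V)"
  using redw_set[of w] redw_red[of w] by (auto simp: Z2_carrier)

lemma Z2_group: "group (Z2free V)"
proof (rule groupI)
  fix x y assume "x \<in> carrier (Z2free V)" "y \<in> carrier (Z2free V)"
  then show "x \<otimes>\<^bsub>Z2free V\<^esub> y \<in> carrier (Z2free V)"
    by (auto simp: Z2_mult Z2_carrier intro!: redw_in_carrier[simplified Z2_carrier, simplified])
next
  show "\<one>\<^bsub>Z2free V\<^esub> \<in> carrier (Z2free V)" by (simp add: Z2_one Z2_carrier)
next
  fix x y z
  show "x \<otimes>\<^bsub>Z2free V\<^esub> y \<otimes>\<^bsub>Z2free V\<^esub> z = x \<otimes>\<^bsub>Z2free V\<^esub> (y \<otimes>\<^bsub>Z2free V\<^esub> z)"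
    by (simp add: Z2_mult redw_append_left redw_append_right)
next
  fix x assume "x \<in> carrier (Z2free V)"
  then show "\<one>\<^bsub>Z2free V\<^esub> \<otimes>\<^bsub>Z2free V\<^esub> x = x"
    by (simp add: Z2_one Z2_mult Z2_carrier redw_of_red)
next
  fix x assume "x \<in> carrier (Z2free V)"
  then show "\<exists>y\<in>carrier (Z2free V). y \<otimes>\<^bsub>Z2free V\<^esub> x = \<one>\<^bsub>Z2free V\<^esub>"
    by (intro bexI[of _ "rev x"]) (auto simp: Z2_one Z2_mult Z2_carrier redw_rev_self red_def successively_rev elim: successively_mono)
qed

lemma ev_mult: "redw (x @ y) = redw x \<otimes>\<^bsub>Z2free V\<^esub> redw y"
  by (simp add: Z2_mult redw_append_left redw_append_right)

lemma ev_inv: "set u \<subseteq> V \<Longrightarrow> inv\<^bsub>Z2free V\<^esub> (redw u) = redw (rev u)"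
  by (rule group.inv_equality[OF Z2_group])
     (auto simp: ev_mult[symmetric] redw_rev_self Z2_one intro!: redw_in_carrier)

lemma redw_map_cancel1:
  assumes "inj_on f (insert c (set z))"
  shows "map f (cancel1 c z) = cancel1 (f c) (map f z)"
  using assms by (cases z) (auto dest: inj_onD)

lemma redw_map: "inj_on f A \<Longrightarrow> set w \<subseteq> A \<Longrightarrow> redw (map f w) = map f (redw w)"
proof (induction w)
  case Nil then show ?case by (simp add: redw_def)
next
  case (Cons c w)
  have "inj_on f (insert c (set (redw w)))"
    by (rule inj_on_subset[OF Cons.prems(1)]) (use Cons.prems redw_set[of w] in auto)
  then show ?case using Cons by (simp add: redw_Cons redw_map_cancel1)
qed



lemma wf_iso:
  assumes "wf_graph K" "graph_iso K K' \<phi>"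
  shows "wf_graph K'"
proof -
  have bij: "bij_betw \<phi> (verts K) (verts K')" and E: "edges K' = (\<lambda>e. \<phi> ` e) ` edges K"
    using assms(2) by (auto simp: graph_iso_def)
  have "finite (verts K)" using assms(1) by (simp add: wf_graph_def)
  then have "finite (verts K')" using bij by (simp add: bij_betw_finite)
  moreover have "\<forall>e\<in>edges K'. e \<subseteq> verts K' \<and> (card e = 1 \<or> card e = 2)"
  proof
    fix e' assume "e' \<in> edges K'"
    then obtain e where e: "e \<in> edges K" "e' = \<phi> ` e" using E by auto
    have sub: "e \<subseteq> verts K" and c: "card e = 1 \<or> card e = 2" using e assms(1) by (auto simp: wf_graph_def)
    have "inj_on \<phi> (verts K)" using bij by (simp add: bij_betw_def)
    then have "inj_on \<phi> e" using sub by (rule inj_on_subset)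
    then have "card e' = card e" using e(2) by (simp add: card_image)
    moreover have "e' \<subseteq> verts K'" using e(2) sub bij by (auto simp: bij_betw_def)
    ultimately show "e' \<subseteq> verts K' \<and> (card e' = 1 \<or> card e' = 2)" using c by simp
  qed
  ultimately show ?thesis by (simp add: wf_graph_def)
qed

lemma wf_gen:
  assumes S: "\<forall>X\<in>S. wf_bgraph X"
  shows "X \<in> gen_cat S \<Longrightarrow> wf_bgraph X"
proof (induction rule: gen_cat.induct)
  case (base X) then show ?case using S by blast
next
  case zero then show ?case by (simp add: wf_bgraph_def bzero_def wf_graph_def verts_def edges_def)
next
  case M11 then show ?case by (simp add: wf_bgraph_def bM_def wf_graph_def verts_def edges_def)
next
  case M02 then show ?case by (simp add: wf_bgraph_def bM_def wf_graph_def verts_def edges_def)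
next
  case (iso K a b K' \<phi>)
  then have "\<phi> ` verts K = verts K'" by (auto simp: graph_iso_def bij_betw_def)
  with iso show ?case by (auto simp: wf_bgraph_def intro: wf_iso)
next
  case (union K a b H c d f R \<phi>K \<phi>H)
  then show ?case by (auto simp: wf_bgraph_def is_funion_def)
next
  case (comp K a b H c d R \<phi>K \<phi>H)
  then show ?case by (auto simp: wf_bgraph_def is_funion_def)
next
  case (inv K a b) then show ?case by (auto simp: wf_bgraph_def)
qed



lemma M11': "(({0}, {}), [0], [0]) \<in> gen_cat S"
  using gen_cat.M11[of S] by (simp add: bM_def)

lemma M02': "(({0}, {}), [], [0, 0]) \<in> gen_cat S"
  using gen_cat.M02[of S] by (simp add: bM_def numeral_2_eq_2)

lemma idgad: "((set w, {}), w, w) \<in> gen_cat S"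
proof (induction w)
  case Nil then show ?case using gen_cat.zero[of S] by (simp add: bzero_def)
next
  case (Cons z w)
  let ?f = "if z \<in> set w then {(0::nat, z)} else {}"
  have vo: "vertex_overlap ({0}, {}) (set w, {}) ?f"
    by (auto simp: vertex_overlap_def verts_def)
  have fu: "is_funion ({0}, {}) (set w, {}) ?f (insert z (set w), {}) (\<lambda>_. z) id"
    by (auto simp: is_funion_def wf_graph_def verts_def edges_def)
  have "((insert z (set w), {}), map (\<lambda>_. z) [0::nat] @ map id w, map (\<lambda>_. z) [0::nat] @ map id w) \<in> gen_cat S"
    by (rule gen_cat.union[OF M11' Cons vo fu])
  then show ?case by simp
qed

lemma gad2: "((insert v (set a), {}), a, v # v # a) \<in> gen_cat S"
proof -
  let ?f = "if v \<in> set a then {(0::nat, v)} else {}"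
  have vo: "vertex_overlap ({0}, {}) (set a, {}) ?f"
    by (auto simp: vertex_overlap_def verts_def)
  have fu: "is_funion ({0}, {}) (set a, {}) ?f (insert v (set a), {}) (\<lambda>_. v) id"
    by (auto simp: is_funion_def wf_graph_def verts_def edges_def)
  have "((insert v (set a), {}), map (\<lambda>_. v) ([]::nat list) @ map id a, map (\<lambda>_. v) [0::nat,0] @ map id a) \<in> gen_cat S"
    by (rule gen_cat.union[OF M02' idgad vo fu])
  then show ?thesis by simp
qed

context
  fixes S :: "bgraph set"
  assumes S: "\<forall>X\<in>S. wf_bgraph X"
begin

lemma wfK: "(K, a, b) \<in> gen_cat S \<Longrightarrow> wf_graph K \<and> set a \<subseteq> verts K \<and> set b \<subseteq> verts K"
  using wf_gen[OF S, of "(K, a, b)"] by (simp add: wf_bgraph_def)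

lemma bend1:
  assumes X: "(K, v # a, b) \<in> gen_cat S"
  shows "(K, a, v # b) \<in> gen_cat S"
proof -
  have wf: "wf_graph K" "v \<in> verts K" "set a \<subseteq> verts K" "set b \<subseteq> verts K"
    using wfK[OF X] by auto
  have vo: "vertex_overlap ({0}, {}) K {(0, v)}"
    using wf by (auto simp: vertex_overlap_def verts_def)
  have fu: "is_funion ({0}, {}) K {(0, v)} K (\<lambda>_. v) id"
    using wf by (auto simp: is_funion_def verts_def edges_def)
  have Z0: "(K, map (\<lambda>_. v) [0::nat] @ map id (v # a), map (\<lambda>_. v) [0::nat] @ map id b) \<in> gen_cat S"
    by (rule gen_cat.union[OF M11' X vo fu])
  have Z: "(K, v # v # a, v # b) \<in> gen_cat S" using Z0 by simp
  let ?l = "v # v # a"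
  have fe: "{(?l ! i, ?l ! i) | i. i < length ?l} = (\<lambda>x. (x, x)) ` set ?l"
  proof
    show "{(?l ! i, ?l ! i) | i. i < length ?l} \<subseteq> (\<lambda>x. (x, x)) ` set ?l"
      using nth_mem by blast
  next
    show "(\<lambda>x. (x, x)) ` set ?l \<subseteq> {(?l ! i, ?l ! i) | i. i < length ?l}"
    proof
      fix p assume "p \<in> (\<lambda>x. (x, x)) ` set ?l"
      then obtain x where x: "x \<in> set ?l" "p = (x, x)" by blast
      then obtain i where "i < length ?l" "x = ?l ! i" by (metis in_set_conv_nth)
      then show "p \<in> {(?l ! i, ?l ! i) | i. i < length ?l}" using x by blast
    qed
  qed
  have sk: "same_ker ?l ?l" by (simp add: same_ker_def)
  have fu2: "is_funion (insert v (set a), {}) K {(?l ! i, ?l ! i) | i. i < length ?l} K id id"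
    unfolding fe using wf by (auto simp: is_funion_def verts_def edges_def)
  have "(K, map id a, map id (v # b)) \<in> gen_cat S"
    by (rule gen_cat.comp[OF gad2 Z sk fu2])
  then show ?thesis by simp
qed

lemma bend: "(K, a, b) \<in> gen_cat S \<Longrightarrow> (K, [], rev a @ b) \<in> gen_cat S"
proof (induction a arbitrary: b)
  case Nil then show ?case by simp
next
  case (Cons v a) then show ?case using bend1 by fastforce
qed

lemma diag:
  assumes X: "(K, a, b) \<in> gen_cat S" and Y: "(K, c, d) \<in> gen_cat S"
  shows "(K, a @ c, b @ d) \<in> gen_cat S"
proof -
  have wf: "wf_graph K" using wfK[OF X] by auto
  have vo: "vertex_overlap K K ((\<lambda>x. (x, x)) ` verts K)"
    by (auto simp: vertex_overlap_def)
  have fu: "is_funion K K ((\<lambda>x. (x, x)) ` verts K) K id id"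
    using wf by (auto simp: is_funion_def)
  have "(K, map id a @ map id c, map id b @ map id d) \<in> gen_cat S"
    by (rule gen_cat.union[OF X Y vo fu])
  then show ?thesis by simp
qed

lemma app1:
  assumes X: "(K, a, b) \<in> gen_cat S" and z: "z \<in> verts K"
  shows "(K, a @ [z], b @ [z]) \<in> gen_cat S"
proof -
  have wf: "wf_graph K" using wfK[OF X] by auto
  have vo: "vertex_overlap K ({0}, {}) {(z, 0)}"
    using z by (auto simp: vertex_overlap_def verts_def)
  have fu: "is_funion K ({0}, {}) {(z, 0)} K id (\<lambda>_. z)"
    using wf z by (auto simp: is_funion_def verts_def edges_def)
  have "(K, map id a @ map (\<lambda>_. z) [0::nat], map id b @ map (\<lambda>_. z) [0::nat]) \<in> gen_cat S"
    by (rule gen_cat.union[OF X M11' vo fu])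
  then show ?thesis by simp
qed

lemma appw: "(K, a, b) \<in> gen_cat S \<Longrightarrow> set w \<subseteq> verts K \<Longrightarrow> (K, a @ w, b @ w) \<in> gen_cat S"
proof (induction w arbitrary: a b)
  case Nil then show ?case by simp
next
  case (Cons z w)
  then have "(K, a @ [z], b @ [z]) \<in> gen_cat S" using app1 by auto
  then show ?case using Cons by fastforce
qed

lemma gensC:
  assumes X: "(K, [], w0) \<in> gen_cat S" and H: "(H, a, b) \<in> S" and i: "graph_inj_hom H K \<iota>"
  shows "(K, map \<iota> a, w0 @ map \<iota> b) \<in> gen_cat S"
proof -
  have wf: "wf_graph K" using wfK[OF X] by auto
  have Y: "(H, a, b) \<in> gen_cat S" using H by (rule gen_cat.base)
  let ?f = "(\<lambda>h. (\<iota> h, h)) ` verts H"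
  have vo: "vertex_overlap K H ?f"
    using i by (auto simp: vertex_overlap_def graph_inj_hom_def dest: inj_onD)
  have E: "(\<lambda>e. \<iota> ` e) ` edges H \<subseteq> edges K" using i by (auto simp: graph_inj_hom_def)
  have fu: "is_funion K H ?f K id \<iota>"
    using wf i E unfolding is_funion_def graph_inj_hom_def by auto
  have "(K, map id [] @ map \<iota> a, map id w0 @ map \<iota> b) \<in> gen_cat S"
    by (rule gen_cat.union[OF X Y vo fu])
  then show ?thesis by simp
qed

end



lemma redw_cancel_mid: "redw (x @ u @ rev u @ y) = redw (x @ y)"
proof -
  have "redw (u @ rev u @ y) = redw y"
    using redw_append_left[of "u @ rev u" y] by (simp add: redw_self_rev)
  then have "redw (x @ redw (u @ rev u @ y)) = redw (x @ redw y)" by simp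
  then show ?thesis by (simp add: redw_append_right)
qed

lemma redw_mid_one: "redw w0 = [] \<Longrightarrow> redw (x @ w0 @ y) = redw (x @ y)"
proof -
  assume h: "redw w0 = []"
  have "redw (w0 @ y) = redw y" using redw_append_left[of w0 y] h by simp
  then have "redw (x @ redw (w0 @ y)) = redw (x @ redw y)" by simp
  then show ?thesis by (simp add: redw_append_right)
qed

lemma hom_comp: "graph_inj_hom K R0 \<psi> \<Longrightarrow> graph_inj_hom R0 R \<phi> \<Longrightarrow> graph_inj_hom K R (\<phi> \<circ> \<psi>)"
proof -
  assume a1: "graph_inj_hom K R0 \<psi>" and a2: "graph_inj_hom R0 R \<phi>"
  have "\<forall>e\<in>edges K. \<phi> ` (\<psi> ` e) \<in> edges R" using a1 a2 unfolding graph_inj_hom_def by blast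
  moreover have "inj_on (\<phi> \<circ> \<psi>) (verts K)"
    using a1 a2 unfolding graph_inj_hom_def by (meson comp_inj_on inj_on_subset)
  moreover have "(\<phi> \<circ> \<psi>) ` verts K \<subseteq> verts R"
    using a1 a2 unfolding graph_inj_hom_def by (auto simp: image_comp[symmetric])
  ultimately show ?thesis unfolding graph_inj_hom_def by (simp add: image_comp)
qed

lemma funion_hom: "is_funion K H f R \<phi>K \<phi>H \<Longrightarrow> graph_inj_hom K R \<phi>K \<and> graph_inj_hom H R \<phi>H"
  unfolding is_funion_def graph_inj_hom_def by auto

lemma iso_hom: "graph_iso K K' \<psi> \<Longrightarrow> graph_inj_hom K K' \<psi>"
  unfolding graph_iso_def graph_inj_hom_def bij_betw_def by auto

lemma id_hom: "graph_inj_hom K K id"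
  unfolding graph_inj_hom_def by auto

lemma hom_set: "graph_inj_hom K R \<phi> \<Longrightarrow> set w \<subseteq> verts K \<Longrightarrow> set (map \<phi> w) \<subseteq> verts R"
  unfolding graph_inj_hom_def by auto

context
  fixes S :: "bgraph set"
  assumes S: "\<forall>X\<in>S. wf_bgraph X"
begin

lemma sub_N:
  assumes "X \<in> gen_cat S"
  shows "\<forall>R \<phi> N. graph_inj_hom (fst X) R \<phi> \<and> N \<lhd> Z2free (verts R) \<and> gens S R \<subseteq> N \<longrightarrow>
           redw (map \<phi> (rev (fst (snd X)) @ snd (snd X))) \<in> N"
  using assms
proof (induction rule: gen_cat.induct)
  case (base X)
  obtain K a b where X: "X = (K, a, b)" by (cases X) auto
  have wf: "set a \<subseteq> verts K" "set b \<subseteq> verts K" using S base X by (auto simp: wf_bgraph_def)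
  show ?case
  proof (intro allI impI)
    fix R \<phi> N assume h: "graph_inj_hom (fst X) R \<phi> \<and> N \<lhd> Z2free (verts R) \<and> gens S R \<subseteq> N"
    have inj: "inj_on \<phi> (verts K)" using h X by (simp add: graph_inj_hom_def)
    have ws: "set (rev a @ b) \<subseteq> verts K" using wf by auto
    have e1: "redw (map \<phi> (rev a @ b)) = map \<phi> (redw (rev a @ b))"
      by (rule redw_map[OF inj ws])
    have e2: "redw (map \<phi> (redw (rev a @ b))) = map \<phi> (redw (rev a @ b))"
    proof -
      have "set (redw (rev a @ b)) \<subseteq> verts K" using redw_set[of "rev a @ b"] ws by (rule subset_trans)
      then show ?thesis using redw_map[OF inj, of "redw (rev a @ b)"] by simp
    qed
    have "redw (map \<phi> (redw (rev a @ b))) \<in> gens S R"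
    proof -
      have "(K, a, b) \<in> S" "graph_inj_hom K R \<phi>" using base X h by auto
      then show ?thesis unfolding gens_def by blast
    qed
    then show "redw (map \<phi> (rev (fst (snd X)) @ snd (snd X))) \<in> N"
      using h e1 e2 X by auto
  qed
next
  case zero
  show ?case
  proof (intro allI impI)
    fix R \<phi> N assume h: "graph_inj_hom (fst bzero) R \<phi> \<and> N \<lhd> Z2free (verts R) \<and> gens S R \<subseteq> N"
    then have "\<one>\<^bsub>Z2free (verts R)\<^esub> \<in> N" using normal_imp_subgroup subgroup.one_closed by blast
    then show "redw (map \<phi> (rev (fst (snd bzero)) @ snd (snd bzero))) \<in> N"
      by (simp add: bzero_def redw_def Z2_one)
  qed
next
  case M11
  show ?case
  proof (intro allI impI)
    fix R \<phi> N assume h: "graph_inj_hom (fst (bM 1 1)) R \<phi> \<and> N \<lhd> Z2free (verts R) \<and> gens S R \<subseteq> N"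
    then have "\<one>\<^bsub>Z2free (verts R)\<^esub> \<in> N" using normal_imp_subgroup subgroup.one_closed by blast
    then show "redw (map \<phi> (rev (fst (snd (bM 1 1))) @ snd (snd (bM 1 1)))) \<in> N"
      by (simp add: bM_def redw_def Z2_one)
  qed
next
  case M02
  show ?case
  proof (intro allI impI)
    fix R \<phi> N assume h: "graph_inj_hom (fst (bM 0 2)) R \<phi> \<and> N \<lhd> Z2free (verts R) \<and> gens S R \<subseteq> N"
    then have "\<one>\<^bsub>Z2free (verts R)\<^esub> \<in> N" using normal_imp_subgroup subgroup.one_closed by blast
    then show "redw (map \<phi> (rev (fst (snd (bM 0 2))) @ snd (snd (bM 0 2)))) \<in> N"
      by (simp add: bM_def redw_def Z2_one numeral_2_eq_2)
  qed
next
  case (iso K a b K' \<psi>)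
  show ?case
  proof (intro allI impI)
    fix R \<phi> N assume h: "graph_inj_hom (fst (K', map \<psi> a, map \<psi> b)) R \<phi> \<and> N \<lhd> Z2free (verts R) \<and> gens S R \<subseteq> N"
    have "graph_inj_hom K R (\<phi> \<circ> \<psi>)" using h iso_hom[OF iso.hyps(2)] hom_comp by auto
    then have "graph_inj_hom (fst (K, a, b)) R (\<phi> \<circ> \<psi>) \<and> N \<lhd> Z2free (verts R) \<and> gens S R \<subseteq> N"
      using h by simp
    then have "redw (map (\<phi> \<circ> \<psi>) (rev (fst (snd (K, a, b))) @ snd (snd (K, a, b)))) \<in> N"
      using iso.IH by blast
    then have "redw (map (\<phi> \<circ> \<psi>) (rev a @ b)) \<in> N" by simp
    then show "redw (map \<phi> (rev (fst (snd (K', map \<psi> a, map \<psi> b))) @ snd (snd (K', map \<psi> a, map \<psi> b)))) \<in> N"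
      by (simp add: rev_map)
  qed
next
  case (union K a b H c d f R0 \<phi>K \<phi>H)
  show ?case
  proof (intro allI impI)
    fix R \<phi> N assume h: "graph_inj_hom (fst (R0, map \<phi>K a @ map \<phi>H c, map \<phi>K b @ map \<phi>H d)) R \<phi> \<and> N \<lhd> Z2free (verts R) \<and> gens S R \<subseteq> N"
    let ?G = "Z2free (verts R)"
    have grp: "group ?G" by (rule Z2_group)
    have nN: "N \<lhd> ?G" and sg: "subgroup N ?G" using h normal_imp_subgroup by auto
    have h0: "graph_inj_hom R0 R \<phi>" using h by simp
    have fh: "graph_inj_hom K R0 \<phi>K" "graph_inj_hom H R0 \<phi>H" using funion_hom[OF union.hyps(4)] by auto
    have hK: "graph_inj_hom K R (\<phi> \<circ> \<phi>K)" by (rule hom_comp[OF fh(1) h0])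
    have hH: "graph_inj_hom H R (\<phi> \<circ> \<phi>H)" by (rule hom_comp[OF fh(2) h0])
    have wK: "set a \<subseteq> verts K" "set b \<subseteq> verts K" using wfK[OF S union.hyps(1)] by auto
    have wH: "set c \<subseteq> verts H" "set d \<subseteq> verts H" using wfK[OF S union.hyps(2)] by auto
    define A where "A = map (\<phi> \<circ> \<phi>K) a"
    define B where "B = map (\<phi> \<circ> \<phi>K) b"
    define C where "C = map (\<phi> \<circ> \<phi>H) c"
    define D where "D = map (\<phi> \<circ> \<phi>H) d"
    have sC: "set C \<subseteq> verts R" unfolding C_def using hom_set[OF hH wH(1)] .
    have hK': "graph_inj_hom (fst (K, a, b)) R (\<phi> \<circ> \<phi>K)" using hK by simp
    have hH': "graph_inj_hom (fst (H, c, d)) R (\<phi> \<circ> \<phi>H)" using hH by simp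
    have NN: "N \<lhd> Z2free (verts R)" "gens S R \<subseteq> N" using h by auto
    have P0: "redw (map (\<phi> \<circ> \<phi>K) (rev (fst (snd (K, a, b))) @ snd (snd (K, a, b)))) \<in> N"
      using union.IH(1) hK' NN by blast
    have Q0: "redw (map (\<phi> \<circ> \<phi>H) (rev (fst (snd (H, c, d))) @ snd (snd (H, c, d)))) \<in> N"
      using union.IH(2) hH' NN by blast
    have P: "redw (rev A @ B) \<in> N" using P0 by (simp add: A_def B_def rev_map)
    have Q: "redw (rev C @ D) \<in> N" using Q0 by (simp add: C_def D_def rev_map)
    have eq: "map \<phi> (rev (map \<phi>K a @ map \<phi>H c) @ map \<phi>K b @ map \<phi>H d) = rev C @ rev A @ B @ D"
      by (simp add: A_def B_def C_def D_def rev_map)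
    have "redw (rev C @ rev A @ B @ D) = redw (rev C @ (rev A @ B) @ C @ rev C @ D)"
      using redw_cancel_mid[of "rev C @ rev A @ B" C D] by simp
    also have "\<dots> = redw (rev C) \<otimes>\<^bsub>?G\<^esub> redw (rev A @ B) \<otimes>\<^bsub>?G\<^esub> inv\<^bsub>?G\<^esub> (redw (rev C)) \<otimes>\<^bsub>?G\<^esub> redw (rev C @ D)"
      using ev_inv[of "rev C" "verts R"] sC
      by (simp add: ev_mult[symmetric, where V = "verts R"])
    finally have e: "redw (rev C @ rev A @ B @ D) = \<dots>" .
    have hc: "redw (rev C) \<in> carrier ?G" using sC by (intro redw_in_carrier) simp
    have "redw (rev C) \<otimes>\<^bsub>?G\<^esub> redw (rev A @ B) \<otimes>\<^bsub>?G\<^esub> inv\<^bsub>?G\<^esub> (redw (rev C)) \<in> N"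
      using group.normal_invE(2)[OF grp nN hc P] .
    then have "redw (rev C @ rev A @ B @ D) \<in> N"
      unfolding e using Q subgroup.m_closed[OF sg] by blast
    then show "redw (map \<phi> (rev (fst (snd (R0, map \<phi>K a @ map \<phi>H c, map \<phi>K b @ map \<phi>H d))) @
                 snd (snd (R0, map \<phi>K a @ map \<phi>H c, map \<phi>K b @ map \<phi>H d)))) \<in> N"
      using eq by simp
  qed
next
  case (comp K a b H c d R0 \<phi>K \<phi>H)
  show ?case
  proof (intro allI impI)
    fix R \<phi> N assume h: "graph_inj_hom (fst (R0, map \<phi>K a, map \<phi>H d)) R \<phi> \<and> N \<lhd> Z2free (verts R) \<and> gens S R \<subseteq> N"
    let ?G = "Z2free (verts R)"
    have sg: "subgroup N ?G" using h normal_imp_subgroup by auto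
    have h0: "graph_inj_hom R0 R \<phi>" using h by simp
    have fh: "graph_inj_hom K R0 \<phi>K" "graph_inj_hom H R0 \<phi>H" using funion_hom[OF comp.hyps(4)] by auto
    have hK: "graph_inj_hom K R (\<phi> \<circ> \<phi>K)" by (rule hom_comp[OF fh(1) h0])
    have hH: "graph_inj_hom H R (\<phi> \<circ> \<phi>H)" by (rule hom_comp[OF fh(2) h0])
    have wK: "set b \<subseteq> verts K" using wfK[OF S comp.hyps(1)] by auto
    have wH: "set c \<subseteq> verts H" using wfK[OF S comp.hyps(2)] by auto
    have len: "length b = length c" using comp.hyps(3) by (simp add: same_ker_def)
    have bc: "map \<phi>K b = map \<phi>H c"
    proof (rule nth_equalityI)
      show "length (map \<phi>K b) = length (map \<phi>H c)" using len by simp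
    next
      fix i assume i: "i < length (map \<phi>K b)"
      then have "b ! i \<in> verts K" "c ! i \<in> verts H" using wK wH len nth_mem by fastforce+
      moreover have "(b ! i, c ! i) \<in> {(b ! i, c ! i) |i. i < length b}" using i by auto
      ultimately have "\<phi>K (b ! i) = \<phi>H (c ! i)" using comp.hyps(4) unfolding is_funion_def by blast
      then show "map \<phi>K b ! i = map \<phi>H c ! i" using i len by simp
    qed
    define A where "A = map (\<phi> \<circ> \<phi>K) a"
    define B where "B = map (\<phi> \<circ> \<phi>K) b"
    define D where "D = map (\<phi> \<circ> \<phi>H) d"
    have BC: "B = map (\<phi> \<circ> \<phi>H) c" unfolding B_def using bc by (metis map_map)
    have hK': "graph_inj_hom (fst (K, a, b)) R (\<phi> \<circ> \<phi>K)" using hK by simp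
    have hH': "graph_inj_hom (fst (H, c, d)) R (\<phi> \<circ> \<phi>H)" using hH by simp
    have NN: "N \<lhd> Z2free (verts R)" "gens S R \<subseteq> N" using h by auto
    have P0: "redw (map (\<phi> \<circ> \<phi>K) (rev (fst (snd (K, a, b))) @ snd (snd (K, a, b)))) \<in> N"
      using comp.IH(1) hK' NN by blast
    have Q0: "redw (map (\<phi> \<circ> \<phi>H) (rev (fst (snd (H, c, d))) @ snd (snd (H, c, d)))) \<in> N"
      using comp.IH(2) hH' NN by blast
    have P: "redw (rev A @ B) \<in> N" using P0 by (simp add: A_def B_def rev_map)
    have Q: "redw (rev B @ D) \<in> N" using Q0 by (simp add: BC D_def rev_map)
    have "redw (rev A @ D) = redw (rev A @ B @ rev B @ D)"
      using redw_cancel_mid[of "rev A" B D] by simp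
    also have "\<dots> = redw (rev A @ B) \<otimes>\<^bsub>?G\<^esub> redw (rev B @ D)"
      by (simp add: ev_mult[symmetric, where V = "verts R"])
    finally have "redw (rev A @ D) \<in> N" using P Q subgroup.m_closed[OF sg] by simp
    then show "redw (map \<phi> (rev (fst (snd (R0, map \<phi>K a, map \<phi>H d))) @ snd (snd (R0, map \<phi>K a, map \<phi>H d)))) \<in> N"
      by (simp add: A_def D_def rev_map)
  qed
next
  case (inv K a b)
  show ?case
  proof (intro allI impI)
    fix R \<phi> N assume h: "graph_inj_hom (fst (K, b, a)) R \<phi> \<and> N \<lhd> Z2free (verts R) \<and> gens S R \<subseteq> N"
    have sg: "subgroup N (Z2free (verts R))" using h normal_imp_subgroup by auto
    have w: "set a \<subseteq> verts K" "set b \<subseteq> verts K" using wfK[OF S inv.hyps] by auto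
    have s: "set (map \<phi> (rev a @ b)) \<subseteq> verts R" using hom_set[of K R \<phi> "rev a @ b"] h w by auto
    have hh: "graph_inj_hom (fst (K, a, b)) R \<phi>" "N \<lhd> Z2free (verts R)" "gens S R \<subseteq> N" using h by auto
    have "redw (map \<phi> (rev (fst (snd (K, a, b))) @ snd (snd (K, a, b)))) \<in> N" using inv.IH hh by blast
    then have "redw (map \<phi> (rev a @ b)) \<in> N" by simp
    then have "inv\<^bsub>Z2free (verts R)\<^esub> (redw (map \<phi> (rev a @ b))) \<in> N"
      using subgroup.m_inv_closed[OF sg] by blast
    then show "redw (map \<phi> (rev (fst (snd (K, b, a))) @ snd (snd (K, b, a)))) \<in> N"
      using ev_inv[OF s] by (simp add: rev_map)
  qed
qed

end



lemma closure_nonempty: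
  "K \<in> graph_closure S \<Longrightarrow> \<exists>a b. (K, a, b) \<in> gen_cat S"
proof (induction rule: graph_closure.induct)
  case N0 then show ?case using gen_cat.zero[of S] by (auto simp: bzero_def edgeless_def)
next
  case N1
  have "edgeless 1 = ({0}, {})" by (auto simp: edgeless_def)
  then show ?case using M11' by auto
next
  case (base H a b) then show ?case by (blast intro: gen_cat.base)
next
  case (iso K K' \<phi>) then show ?case by (blast intro: gen_cat.iso)
next
  case (union K H f R \<phi>K \<phi>H) then show ?case by (blast intro: gen_cat.union)
qed

context
  fixes S :: "bgraph set"
  assumes S: "\<forall>X\<in>S. wf_bgraph X"
begin

lemma FibI: "(K, [], w) \<in> gen_cat S \<Longrightarrow> redw w \<in> Fib (gen_cat S) K"
  unfolding Fib_def by (metis (mono_tags, lifting) append_Nil mem_Collect_eq rev.simps(1))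

lemma FibE: "x \<in> Fib (gen_cat S) K \<Longrightarrow> \<exists>w. (K, [], w) \<in> gen_cat S \<and> x = redw w"
  unfolding Fib_def using bend[OF S] by blast

lemma Fib_sub: "Fib (gen_cat S) K \<subseteq> normal_closure (Z2free (verts K)) (gens S K)"
proof
  fix x assume "x \<in> Fib (gen_cat S) K"
  then obtain a b where X: "(K, a, b) \<in> gen_cat S" and x: "x = redw (rev a @ b)"
    unfolding Fib_def by blast
  show "x \<in> normal_closure (Z2free (verts K)) (gens S K)"
    unfolding normal_closure_def
  proof
    fix N assume "N \<in> {N. N \<lhd> Z2free (verts K) \<and> gens S K \<subseteq> N}"
    then have h: "graph_inj_hom (fst (K, a, b)) K id \<and> N \<lhd> Z2free (verts K) \<and> gens S K \<subseteq> N"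
      using id_hom by auto
    have "redw (map id (rev (fst (snd (K, a, b))) @ snd (snd (K, a, b)))) \<in> N"
      using sub_N[OF S X] h by blast
    then show "x \<in> N" using x by simp
  qed
qed

lemma Fib_normal:
  assumes ne: "Fib (gen_cat S) K \<noteq> {}"
  shows "Fib (gen_cat S) K \<lhd> Z2free (verts K)"
proof -
  let ?G = "Z2free (verts K)"
  let ?F = "Fib (gen_cat S) K"
  have grp: "group ?G" by (rule Z2_group)
  have sub: "?F \<subseteq> carrier ?G"
  proof
    fix x assume "x \<in> ?F"
    then obtain w where w: "(K, [], w) \<in> gen_cat S" "x = redw w" using FibE by blast
    then show "x \<in> carrier ?G" using wfK[OF S w(1)] redw_in_carrier by blast
  qed
  have sg: "subgroup ?F ?G"
  proof (rule group.subgroupI[OF grp sub ne])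
    fix x assume "x \<in> ?F"
    then obtain w where w: "(K, [], w) \<in> gen_cat S" "x = redw w" using FibE by blast
    have sw: "set w \<subseteq> verts K" using wfK[OF S w(1)] by auto
    have "(K, w, []) \<in> gen_cat S" using w(1) by (rule gen_cat.inv)
    then have "(K, [], rev w @ []) \<in> gen_cat S" by (rule bend[OF S])
    then have "redw (rev w) \<in> ?F" using FibI by simp
    then show "inv\<^bsub>?G\<^esub> x \<in> ?F" using ev_inv[OF sw] w(2) by simp
  next
    fix x y assume "x \<in> ?F" "y \<in> ?F"
    then obtain w1 w2 where w: "(K, [], w1) \<in> gen_cat S" "x = redw w1"
        "(K, [], w2) \<in> gen_cat S" "y = redw w2" using FibE by metis
    have "(K, [] @ [], w1 @ w2) \<in> gen_cat S" by (rule diag[OF S w(1) w(3)])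
    then have "redw (w1 @ w2) \<in> ?F" using FibI by simp
    then show "x \<otimes>\<^bsub>?G\<^esub> y \<in> ?F" using w by (simp add: ev_mult[symmetric])
  qed
  show ?thesis
  proof (rule group.normal_invI[OF grp sg])
    fix x h assume x: "x \<in> carrier ?G" and h: "h \<in> ?F"
    then obtain w where w: "(K, [], w) \<in> gen_cat S" "h = redw w" using FibE by blast
    have sx: "set x \<subseteq> verts K" and rx: "redw x = x"
      using x by (auto simp: Z2_carrier redw_of_red)
    have "(K, [] @ rev x, w @ rev x) \<in> gen_cat S" using appw[OF S w(1)] sx by simp
    then have "(K, [], rev (rev x) @ w @ rev x) \<in> gen_cat S" using bend[OF S] by fastforce
    then have "redw (x @ w @ rev x) \<in> ?F" using FibI by simp
    moreover have "redw (x @ w @ rev x) = x \<otimes>\<^bsub>?G\<^esub> h \<otimes>\<^bsub>?G\<^esub> inv\<^bsub>?G\<^esub> x"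
    proof -
      have "x \<otimes>\<^bsub>?G\<^esub> h \<otimes>\<^bsub>?G\<^esub> inv\<^bsub>?G\<^esub> x = redw x \<otimes>\<^bsub>?G\<^esub> redw w \<otimes>\<^bsub>?G\<^esub> redw (rev x)"
        using ev_inv[OF sx] rx w(2) by simp
      also have "\<dots> = redw (x @ w) \<otimes>\<^bsub>?G\<^esub> redw (rev x)"
        by (simp only: ev_mult[of x w "verts K"])
      also have "\<dots> = redw ((x @ w) @ rev x)"
        by (rule ev_mult[symmetric])
      finally show ?thesis by simp
    qed
    ultimately show "x \<otimes>\<^bsub>?G\<^esub> h \<otimes>\<^bsub>?G\<^esub> inv\<^bsub>?G\<^esub> x \<in> ?F" by simp
  qed
qed

lemma gens_sub:
  assumes ne: "Fib (gen_cat S) K \<noteq> {}"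
  shows "gens S K \<subseteq> Fib (gen_cat S) K"
proof
  let ?G = "Z2free (verts K)"
  fix g assume "g \<in> gens S K"
  then obtain H a b \<iota> where g: "g = redw (map \<iota> (redw (rev a @ b)))" and H: "(H, a, b) \<in> S"
      and i: "graph_inj_hom H K \<iota>"
    unfolding gens_def by blast
  have "subgroup (Fib (gen_cat S) K) ?G" using Fib_normal[OF ne] normal_imp_subgroup by blast
  then have "[] \<in> Fib (gen_cat S) K" using subgroup.one_closed Z2_one by metis
  then obtain w0 where w0: "(K, [], w0) \<in> gen_cat S" "redw w0 = []" using FibE by metis
  have "(K, map \<iota> a, w0 @ map \<iota> b) \<in> gen_cat S" by (rule gensC[OF S w0(1) H i])
  then have "(K, [], rev (map \<iota> a) @ w0 @ map \<iota> b) \<in> gen_cat S" using bend[OF S] by fastforce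
  then have m: "redw (rev (map \<iota> a) @ w0 @ map \<iota> b) \<in> Fib (gen_cat S) K" by (rule FibI)
  have wf: "set a \<subseteq> verts H" "set b \<subseteq> verts H" using S H by (auto simp: wf_bgraph_def)
  have inj: "inj_on \<iota> (verts H)" using i by (simp add: graph_inj_hom_def)
  have ws: "set (rev a @ b) \<subseteq> verts H" using wf by auto
  have ws2: "set (redw (rev a @ b)) \<subseteq> verts H" using redw_set[of "rev a @ b"] ws by (rule subset_trans)
  have "redw (rev (map \<iota> a) @ w0 @ map \<iota> b) = redw (map \<iota> (rev a @ b))"
    using redw_mid_one[OF w0(2)] by (simp add: rev_map)
  also have "\<dots> = map \<iota> (redw (rev a @ b))" by (rule redw_map[OF inj ws])
  also have "\<dots> = g" using g redw_map[OF inj ws2] by simp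
  finally show "g \<in> Fib (gen_cat S) K" using m by simp
qed

end

theorem proposition2p29:
  fixes S :: "bgraph set"
  assumes "\<forall>X\<in>S. wf_bgraph X"
  shows "(\<forall>K\<in>graph_closure S. Fib (gen_cat S) K \<noteq> {}) \<and>
         (\<forall>K. wf_graph K \<and> Fib (gen_cat S) K \<noteq> {} \<longrightarrow>
              Fib (gen_cat S) K = normal_closure (Z2free (verts K)) (gens S K))"
proof (intro conjI ballI allI impI)
  fix K assume "K \<in> graph_closure S"
  then obtain a b where "(K, a, b) \<in> gen_cat S" using closure_nonempty by blast
  then show "Fib (gen_cat S) K \<noteq> {}" unfolding Fib_def by blast
next
  fix K assume h: "wf_graph K \<and> Fib (gen_cat S) K \<noteq> {}"
  show "Fib (gen_cat S) K = normal_closure (Z2free (verts K)) (gens S K)"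
  proof
    show "Fib (gen_cat S) K \<subseteq> normal_closure (Z2free (verts K)) (gens S K)"
      by (rule Fib_sub[OF assms])
  next
    show "normal_closure (Z2free (verts K)) (gens S K) \<subseteq> Fib (gen_cat S) K"
      unfolding normal_closure_def
      using Fib_normal[OF assms] gens_sub[OF assms] h by blast
  qed
qed


end
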